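(* Let $n\ge 8$ and let $T=(l_1,\dots,l_n)$, $l_1\le\cdots\le l_n$, be an impossibly burnable $n$-path forest of order $m^2$ with $l_1=M_n$. Then $B_m(l_i)\in\{3,4\}$ for every $i\in[n]$. Moreover, in this situation $l_1$ is odd (equivalently $B_m(l_1)=3$).
   Context: A path forest is a disjoint union of paths; an $n$-path forest is represented by the tuple $(l_1,\dots,l_n)$ of its path orders, with total order $\sum_i l_i=m^2$. For $m\in\mathbb{N}$ and an integer $1\le l\le m^2$, let $B_m(l)$ be the least positive integer $t$ with $t\equiv l\pmod 2$ such that $l\le 2mt-t^2$. An $n$-path forest of order $m^2$ is impossibly burnable if $\sum_{i=1}^n B_m(l_i)>m$. For $n\ge2$, $M_n$ denotes the maximum of $l_1$ over all impossibly burnable $n$-path forests. *)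

theory Defs
  imports Main
begin

definition B :: "nat \<Rightarrow> nat \<Rightarrow> nat" where
  "B m l = (LEAST t. 0 < t \<and> t mod 2 = l mod 2 \<and>
              int l \<le> 2 * int m * int t - int t ^ 2)"

definition path_forest_of_order :: "nat \<Rightarrow> nat list \<Rightarrow> bool" where
  "path_forest_of_order m ls \<longleftrightarrow> (\<forall>x\<in>set ls. 1 \<le> x) \<and> sum_list ls = m ^ 2"

definition impossibly_burnable :: "nat \<Rightarrow> nat list \<Rightarrow> bool" where
  "impossibly_burnable m ls \<longleftrightarrow>
     path_forest_of_order m ls \<and> sum_list (map (B m) ls) > m"

definition M :: "nat \<Rightarrow> nat" where
  "M n = (GREATEST x. x \<in> {ls ! 0 | ls m. length ls = n \<and> sorted ls \<and>
                                        impossibly_burnable m ls})"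

end

theory Submission
  imports Defs
begin

locale fc =
  fixes n :: nat and M L :: int and y t :: "nat \<Rightarrow> int"
  assumes n8: "n \<ge> 8"
    and M0: "M \<ge> 0"
    and yL: "\<And>i. i < n \<Longrightarrow> L \<le> y i"
    and y0: "y 0 = L"
    and y1: "\<And>i. i < n \<Longrightarrow> 1 \<le> y i"
    and ysum: "(\<Sum>i<n. y i) = M^2"
    and tsum: "(\<Sum>i<n. t i) \<ge> M + 2"
    and t1: "\<And>i. i < n \<Longrightarrow> 1 \<le> t i"
    and thi: "\<And>i. i < n \<Longrightarrow> y i \<le> 2*M*t i - (t i)^2"
    and tM: "\<And>i. i < n \<Longrightarrow> t i \<le> M + 1"
    and tlo: "\<And>i. i < n \<Longrightarrow> t i \<ge> 3 \<Longrightarrow> y i \<ge> (t i - 2)*(2*M - t i + 2) + 2"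
begin

lemma n8i: "int n \<ge> 8" using n8 by simp

lemma nL: "int n * L \<le> M^2"
proof -
  have "(\<Sum>i<n. L) \<le> (\<Sum>i<n. y i)" by (rule sum_mono) (simp add: yL)
  then show ?thesis using ysum by simp
qed

lemma yle: "i < n \<Longrightarrow> y i \<le> M^2"
proof -
  assume i: "i < n"
  have "y i \<le> (\<Sum>j<n. y j)"
    using i y1 by (intro member_le_sum) (auto, meson dual_order.trans zero_le_one)
  also have "\<dots> \<le> M^2" using ysum by simp
  finally show ?thesis .
qed

lemma M3: "M \<ge> 3"
proof (rule ccontr)
  assume "\<not> M \<ge> 3"
  hence "M \<le> 2" by simp
  have "M^2 \<le> 4" using \<open>M \<le> 2\<close> M0
    by (metis power2_eq_square mult_mono' numeral_Bit0 order_refl numeral_code(2) one_add_one mult_2 numeral_times_numeral semiring_norm(12)) 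
  moreover have "int n * 1 \<le> M^2"
  proof -
    have "(\<Sum>i<n. (1::int)) \<le> (\<Sum>i<n. y i)" by (rule sum_mono) (simp add: y1)
    then show ?thesis using ysum by simp
  qed
  ultimately show False using n8 by simp
qed

lemma tleM: "i < n \<Longrightarrow> t i \<le> M"
proof (rule ccontr)
  assume i: "i < n" and "\<not> t i \<le> M"
  hence "t i = M + 1" using tM[OF i] by simp
  hence "y i \<ge> (M - 1)*(M+1) + 2" using tlo[OF i] M3 by (simp add: add.commute)
  moreover have "(M - 1)*(M+1) = M^2 - 1" by (simp add: algebra_simps power2_eq_square)
  ultimately show False using yle[OF i] by simp
qed

lemma slack_big: "i < n \<Longrightarrow> t i \<ge> 3 \<Longrightarrow> M * t i - y i \<le> (t i - 4)*(t i - M) + 2"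
proof -
  assume i: "i < n" and "t i \<ge> 3"
  have "y i \<ge> (t i - 2)*(2*M - t i + 2) + 2" using tlo[OF i \<open>t i \<ge> 3\<close>] .
  moreover have "M * t i - ((t i - 2)*(2*M - t i + 2) + 2) = (t i - 4)*(t i - M) + 2"
    by (simp add: algebra_simps)
  ultimately show ?thesis by linarith
qed

lemma slack_sum: "(\<Sum>i<n. M * t i - y i) \<ge> 2 * M"
proof -
  have "(\<Sum>i<n. M * t i - y i) = M * (\<Sum>i<n. t i) - M^2"
    by (simp add: sum_subtractf sum_distrib_left ysum)
  also have "\<dots> \<ge> M * (M + 2) - M^2"
    using tsum M0 by (simp add: mult_left_mono)
  finally show ?thesis by (simp add: algebra_simps power2_eq_square)
qed

lemma regA: "L \<le> 4*M - 2"
proof (rule ccontr)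
  assume "\<not> L \<le> 4*M - 2"
  hence LA: "L \<ge> 4*M - 1" by simp
  have each: "M * t i - y i \<le> 2" if i: "i < n" for i
  proof (cases "t i \<ge> 4")
    case True
    have "(t i - 4)*(t i - M) \<le> 0"
      using True tleM[OF i] by (simp add: mult_nonneg_nonpos)
    then show ?thesis using slack_big[OF i] True by linarith
  next
    case False
    hence "t i \<le> 3" by simp
    hence "M * t i \<le> M * 3" using M0 by (simp add: mult_left_mono)
    then show ?thesis using yL[OF i] LA M3 by linarith
  qed
  have "(\<Sum>i<n. M * t i - y i) \<le> (\<Sum>i<n. 2)" by (rule sum_mono) (simp add: each)
  hence "2 * M \<le> 2 * int n" using slack_sum by simp
  moreover have "int n * (4*M - 1) \<le> M^2" using nL LA n8
    by (meson le_less_trans mult_left_mono not_less of_nat_0_le_iff order_trans)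
  ultimately have "int n * (4*M - 1) \<le> int n * M"
    by (smt (verit) M0 mult_right_mono power2_eq_square)
  hence "4*M - 1 \<le> M" using n8 by simp
  then show False using M3 by simp
qed

lemma Tlt: "(\<Sum>i<n. t i) < M + 2 * int n"
proof -
  have each: "M * (t i - 2) < y i" if i: "i < n" for i
  proof (cases "t i \<ge> 3")
    case True
    have a: "2*M - t i + 2 \<ge> M + 1" using tM[OF i] by simp
    have "(t i - 2)*(M+1) \<le> (t i - 2)*(2*M - t i + 2)"
      using True a by (simp add: mult_left_mono)
    moreover have "M * (t i - 2) \<le> (t i - 2)*(M+1)" using True by (simp add: algebra_simps)
    ultimately show ?thesis using tlo[OF i True] by linarith
  next
    case False
    hence "M * (t i - 2) \<le> 0" using M0 by (simp add: mult_nonneg_nonpos)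
    then show ?thesis using y1[OF i] by linarith
  qed
  have "(\<Sum>i<n. M * (t i - 2)) < (\<Sum>i<n. y i)"
    by (rule sum_strict_mono) (use n8 each in \<open>auto simp: lessThan_empty_iff\<close>)
  hence "M * (\<Sum>i<n. t i) - M * 2 * int n < M^2"
    by (simp add: sum_distrib_left[symmetric] sum_subtractf algebra_simps ysum)
  hence "M * (\<Sum>i<n. t i) < M * (M + 2 * int n)" by (simp add: algebra_simps power2_eq_square)
  then show ?thesis using M0 by (simp add: mult_less_cancel_left)
qed

lemma regZ:
  assumes MZ: "M \<ge> 4 * int n - 2"
  shows "L \<le> 9 * int n - 6"
proof -
  define sm where "sm i = (if t i \<le> 3 then 1 else (0::int))" for i
  define ex where "ex i = (if t i \<le> 3 then 0 else t i - 4)" for i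
  define a where "a = (\<Sum>i<n. sm i)"
  define X where "X = (\<Sum>i<n. ex i)"
  have ex0: "ex i \<ge> 0" if "i < n" for i unfolding ex_def by auto
  have exX: "ex i \<le> X" if i: "i < n" for i
    unfolding X_def using i ex0 by (intro member_le_sum) auto
  have a0: "a \<ge> 0" unfolding a_def sm_def by (intro sum_nonneg) auto
  have an: "a \<le> int n"
  proof -
    have "a \<le> (\<Sum>i<n. 1)" unfolding a_def sm_def by (intro sum_mono) auto
    then show ?thesis by simp
  qed
  have tup: "t i \<le> 3 * sm i + 4 * (1 - sm i) + ex i" if "i < n" for i
    unfolding sm_def ex_def by auto
  have tdn: "t i \<ge> sm i + 4 * (1 - sm i) + ex i" if "i < n" for i
    unfolding sm_def ex_def using t1[OF that] by auto
  have ylo: "y i \<ge> L * sm i + (1 - sm i) * (4*M - 2) + M * ex i + ex i * (M - 4 - X)" if i: "i < n" for i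
  proof (cases "t i \<le> 3")
    case True
    then show ?thesis unfolding sm_def ex_def using yL[OF i] by simp
  next
    case False
    hence big: "t i \<ge> 4" by simp
    have e: "ex i = t i - 4" unfolding ex_def using False by simp
    have s: "sm i = 0" unfolding sm_def using False by simp
    have A: "y i \<ge> M * t i - 2 - (t i - 4)*(t i - M)" using slack_big[OF i] big by simp
    have tt: "t i = ex i + 4" using e by simp
    have B: "M * t i - 2 - (t i - 4)*(t i - M) = (4*M - 2) + M * ex i + ex i * (M - t i)"
      by (simp only: tt) (simp add: algebra_simps)
    have C: "ex i * (M - 4 - X) \<le> ex i * (M - t i)"
      using ex0[OF i] exX[OF i] e by (intro mult_left_mono) auto
    show ?thesis using A B C s by simp
  qed
  have Tup: "(\<Sum>i<n. t i) \<le> 3 * a + 4 * (int n - a) + X"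
  proof -
    have "(\<Sum>i<n. t i) \<le> (\<Sum>i<n. 3 * sm i + 4 * (1 - sm i) + ex i)"
      by (rule sum_mono) (use tup in auto)
    also have "\<dots> = (\<Sum>i<n. 4 + ex i - sm i)" by (rule sum.cong) (auto simp: algebra_simps)
    also have "\<dots> = 3 * a + 4 * (int n - a) + X"
      unfolding a_def X_def by (simp add: sum.distrib sum_subtractf)
    finally show ?thesis .
  qed
  have Tdn: "(\<Sum>i<n. t i) \<ge> a + 4 * (int n - a) + X"
  proof -
    have "(\<Sum>i<n. t i) \<ge> (\<Sum>i<n. sm i + 4 * (1 - sm i) + ex i)"
      by (rule sum_mono) (use tdn in auto)
    moreover have "(\<Sum>i<n. sm i + 4 * (1 - sm i) + ex i) = (\<Sum>i<n. 4 + ex i - 3 * sm i)"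
      by (rule sum.cong) (auto simp: algebra_simps)
    moreover have "(\<Sum>i<n. 4 + ex i - 3 * sm i) = a + 4 * (int n - a) + X"
      unfolding a_def X_def by (simp add: sum.distrib sum_subtractf sum_distrib_left[symmetric])
    ultimately show ?thesis by simp
  qed
  have Ylo: "M^2 \<ge> a * L + (int n - a) * (4*M - 2) + M * X + X * (M - 4 - X)"
  proof -
    have "(\<Sum>i<n. L * sm i + (1 - sm i) * (4*M - 2) + M * ex i + ex i * (M - 4 - X)) \<le> (\<Sum>i<n. y i)"
      by (rule sum_mono) (use ylo in auto)
    moreover have "(\<Sum>i<n. L * sm i + (1 - sm i) * (4*M - 2) + M * ex i + ex i * (M - 4 - X))
        = a * L + (int n - a) * (4*M - 2) + M * X + X * (M - 4 - X)"
      unfolding a_def X_def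
      by (simp add: sum.distrib sum_subtractf sum_distrib_left sum_distrib_right algebra_simps)
    ultimately show ?thesis using ysum by simp
  qed
  define X0 where "X0 = M + 2 - 3 * a - 4 * (int n - a)"
  have XX0: "X \<ge> X0" unfolding X0_def using Tup tsum by linarith
  have XX1: "2*M - 4 - X - X0 \<ge> 0" unfolding X0_def using Tdn Tlt an a0 n8 by (simp add: algebra_simps)
  have "X * (2*M - 4 - X) - X0 * (2*M - 4 - X0) = (X - X0) * (2*M - 4 - X - X0)"
    by (simp add: algebra_simps)
  moreover have "(X - X0) * (2*M - 4 - X - X0) \<ge> 0" using XX0 XX1 by simp
  ultimately have P: "X * (2*M - 4 - X) \<ge> X0 * (2*M - 4 - X0)" by linarith
  define d where "d = M + 2 - 4 * int n"
  have d0: "d \<ge> 0" unfolding d_def using MZ by simp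
  define Phi where "Phi = a^2 + 8*a*int n - 2*a + 4*a*d - 4*d*int n + 4*d - 6*int n + 4"
  have PhiEq: "M^2 - (int n - a) * (4*M - 2) - X0 * (2*M - 4 - X0) = Phi"
    unfolding Phi_def X0_def d_def by (simp add: algebra_simps power2_eq_square)
  have aL: "a * L \<le> Phi"
  proof -
    have "M * X + X * (M - 4 - X) = X * (2*M - 4 - X)" by (simp add: algebra_simps)
    then show ?thesis using Ylo P PhiEq by linarith
  qed
  have "a \<noteq> int n"
  proof
    assume "a = int n"
    then have "(\<Sum>i<n. t i) \<le> 3 * int n + X" using Tup by simp
    moreover have "X \<le> 0"
    proof -
      have "ex i = 0" if i: "i < n" for i
      proof (rule ccontr)
        assume "ex i \<noteq> 0"
        hence "sm i = 0" unfolding sm_def ex_def by (auto split: if_splits)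
        have "a = (\<Sum>j\<in>{..<n}-{i}. sm j) + sm i"
          unfolding a_def using i by (simp add: sum.remove)
        also have "(\<Sum>j\<in>{..<n}-{i}. sm j) \<le> (\<Sum>j\<in>{..<n}-{i}. 1)"
          by (rule sum_mono) (auto simp: sm_def)
        finally have "a \<le> int n - 1" using \<open>sm i = 0\<close> i by simp
        then show False using \<open>a = int n\<close> by simp
      qed
      then show ?thesis unfolding X_def by simp
    qed
    ultimately show False using tsum MZ n8 by linarith
  qed
  hence an1: "a \<le> int n - 1" using an by simp
  have key: "a * (9 * int n - 5) - Phi = a * (int n - 1 - a) - 2 * a + 4 * d * (int n - 1 - a) + 6 * int n - 4"
    unfolding Phi_def by (simp add: algebra_simps power2_eq_square)
  have p1: "a * (int n - 1 - a) \<ge> 0" using a0 an1 by simp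
  have p2: "d * (int n - 1 - a) \<ge> 0" using d0 an1 by simp
  have pos: "a * (9 * int n - 5) - Phi > 0" using key p1 p2 an1 n8 by linarith
  show ?thesis
  proof (cases "a = 0")
    case True
    then show ?thesis using aL pos by simp
  next
    case False
    hence "a \<ge> 1" using a0 by simp
    have "a * L < a * (9 * int n - 5)" using aL pos by linarith
    hence "L < 9 * int n - 5" using \<open>a \<ge> 1\<close> by (simp add: mult_less_cancel_left)
    then show ?thesis by simp
  qed
qed

lemma sum_ge_single:
  assumes "i < n" and "\<And>j. j < n \<Longrightarrow> (0::int) \<le> f j"
  shows "f i \<le> (\<Sum>j<n. f j)"
  using assms by (intro member_le_sum) auto

lemma main_res:
  assumes MD: "M \<le> 4 * int n - 3" and LL: "L \<ge> 9 * int n - 5"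
  shows "(\<forall>i<n. t i \<notin> {3,4} \<longrightarrow> (4 * int n - 1 - M) * (3*M - L) \<ge> 6 * int n - 7 + M) \<and> t 0 \<noteq> 4"
proof -
  define \<beta> where "\<beta> = 4*M - 2 - L"
  define g where "g = 3*\<beta> - L"
  define E where "E = L - 2*M + 2"
  define \<delta> where "\<delta> i = g - (\<beta> * t i - y i)" for i
  have b0: "\<beta> \<ge> 0" unfolding \<beta>_def using regA by simp
  have M2n: "M \<ge> 2 * int n" using regA LL by linarith
  have E3: "E \<ge> int n + 3" unfolding E_def using MD LL by linarith
  have noGiant: "t i \<le> E - 1" if i: "i < n" and t5: "t i \<ge> 5" for i
  proof (rule ccontr)
    assume "\<not> t i \<le> E - 1"
    hence tE: "t i \<ge> E" by simp
    have lo: "y i \<ge> (t i - 2)*(2*M - t i + 2) + 2" using tlo[OF i] t5 by simp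
    have "(t i - 2)*(2*M - t i + 2) - (E - 2)*(2*M - E + 2) = (t i - E)*(2*M + 4 - t i - E)"
      by (simp add: algebra_simps)
    moreover have "(t i - E)*(2*M + 4 - t i - E) \<ge> 0" using tE tM[OF i] by simp
    ultimately have yE: "y i \<ge> (E - 2)*(2*M - E + 2) + 2" using lo by linarith
    have rest: "(\<Sum>j\<in>{..<n}-{i}. y j) \<ge> (\<Sum>j\<in>{..<n}-{i}. L)"
      by (rule sum_mono) (auto simp: yL)
    have "(\<Sum>j<n. y j) = y i + (\<Sum>j\<in>{..<n}-{i}. y j)" using i by (simp add: sum.remove)
    moreover have "(\<Sum>j\<in>{..<n}-{i}. L) = (int n - 1) * L" using i by simp
    ultimately have big: "M^2 \<ge> (E - 2)*(2*M - E + 2) + 2 + (int n - 1) * L"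
      using ysum yE rest by linarith
    define x where "x = L - 2*M"
    have x1: "x \<ge> int n + 1" unfolding x_def using E3 E_def by simp
    have x2: "x \<le> M - 1" unfolding x_def using tE tM[OF i] E_def by simp
    have "(x - (int n + 1)) * (M - 1 - x) \<ge> 0" using x1 x2 by simp
    hence q: "x * (2*M - x) \<ge> x * (M - int n) + (int n + 1)*(M - 1)"
      by (simp add: algebra_simps)
    have q2: "x * (M - 1) \<ge> (int n + 1) * (M - 1)" using x1 M3 by (intro mult_right_mono) auto
    have q3: "M * (4 * int n - M) \<ge> M * 3" using MD M0 by (intro mult_left_mono) auto
    have eqE: "(E - 2)*(2*M - E + 2) = x * (2*M - x)" unfolding x_def E_def by (simp add: algebra_simps)
    have "(int n - 1) * L = (int n - 1) * (2*M + x)" unfolding x_def by simp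
    hence "M^2 \<ge> x * (M - int n) + (int n + 1)*(M - 1) + 2 + (int n - 1) * (2*M + x)"
      using big eqE q by linarith
    moreover have "x * (M - int n) + (int n + 1)*(M - 1) + 2 + (int n - 1) * (2*M + x)
        = x * (M - 1) + (int n + 1)*(M - 1) + 2 + (int n - 1) * (2*M)"
      by (simp add: algebra_simps)
    ultimately have "M^2 \<ge> 2 * ((int n + 1) * (M - 1)) + 2 + (int n - 1) * (2*M)"
      using q2 by linarith
    moreover have "2 * ((int n + 1) * (M - 1)) + 2 + (int n - 1) * (2*M) = M * (4 * int n - M) + M^2 - 2 * int n"
      by (simp add: algebra_simps power2_eq_square)
    ultimately show False using q3 M2n n8 by linarith
  qed
  have dl: "\<delta> i \<ge> 0 \<and> (t i \<ge> 5 \<longrightarrow> \<delta> i \<ge> E - 5) \<and> (t i \<le> 2 \<longrightarrow> \<delta> i \<ge> \<beta>)" if i: "i < n" for i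
  proof -
    have dE: "\<delta> i = y i - L + (3 - t i) * \<beta>" unfolding \<delta>_def g_def by (simp add: algebra_simps)
    consider "t i = 1" | "t i = 2" | "t i = 3" | "t i = 4" | "t i \<ge> 5" using t1[OF i] by linarith
    then show ?thesis
    proof cases
      case 1
      then show ?thesis using dE yL[OF i] b0 by simp
    next
      case 2
      then show ?thesis using dE yL[OF i] b0 by simp
    next
      case 3
      then show ?thesis using dE yL[OF i] by simp
    next
      case 4
      have "y i \<ge> 4*M - 2" using tlo[OF i] 4 by simp
      then show ?thesis using dE 4 \<beta>_def by simp
    next
      case 5
      have lo: "y i \<ge> (t i - 2)*(2*M - t i + 2) + 2" using tlo[OF i] 5 by simp
      have "g - \<beta> * t i + ((t i - 2)*(2*M - t i + 2) + 2) = (t i - 4) * (E - t i)"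
        unfolding g_def \<beta>_def E_def by (simp add: algebra_simps)
      hence d1: "\<delta> i \<ge> (t i - 4) * (E - t i)" unfolding \<delta>_def using lo by linarith
      have "(t i - 5) * (E - t i - 1) \<ge> 0" using 5 noGiant[OF i 5] by simp
      hence "(t i - 4) * (E - t i) \<ge> E - 5" by (simp add: algebra_simps)
      hence d5: "\<delta> i \<ge> E - 5" using d1 by linarith
      moreover have "\<delta> i \<ge> 0" using d5 E3 n8i by linarith
      ultimately show ?thesis using 5 by simp
    qed
  qed
  have sd: "(\<Sum>i<n. \<delta> i) = int n * g - \<beta> * (\<Sum>i<n. t i) + M^2"
    unfolding \<delta>_def by (simp add: sum_subtractf sum.distrib sum_distrib_left ysum)
  have ident: "(3*M - L) * (4 * int n - 2 - M) = 6 * int n - 4 + (\<Sum>i<n. \<delta> i) + \<beta> * ((\<Sum>i<n. t i) - M - 2)"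
    unfolding sd g_def \<beta>_def by (simp add: algebra_simps power2_eq_square)
  have bT: "\<beta> * ((\<Sum>i<n. t i) - M - 2) \<ge> 0" using b0 tsum by simp
  have sd0: "(\<Sum>i<n. \<delta> i) \<ge> 0" using dl by (intro sum_nonneg) auto
  have D1: "4 * int n - 2 - M \<ge> 1" using MD by simp
  have ypos: "3*M - L > 0"
  proof (rule ccontr)
    assume "\<not> 3*M - L > 0"
    hence "(3*M - L) * (4 * int n - 2 - M) \<le> 0" using D1 by (simp add: mult_nonpos_nonneg)
    then show False using ident bT sd0 n8 by linarith
  qed
  have part1: "(4 * int n - 1 - M) * (3*M - L) \<ge> 6 * int n - 7 + M" if i: "i < n" and v: "t i \<notin> {3,4}" for i
  proof -
    have "t i \<le> 2 \<or> t i \<ge> 5" using v by auto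
    hence "\<delta> i \<ge> E - 5" using dl[OF i] ypos unfolding \<beta>_def E_def by auto
    moreover have "\<delta> i \<le> (\<Sum>j<n. \<delta> j)" using dl by (intro sum_ge_single[OF i]) auto
    ultimately have "(3*M - L) * (4 * int n - 2 - M) \<ge> 6 * int n - 4 + (E - 5)" using ident bT by linarith
    then show ?thesis unfolding E_def by (simp add: algebra_simps)
  qed
  have part2: "t 0 \<noteq> 4"
  proof
    assume t4: "t 0 = 4"
    have "y 0 \<ge> 4*M - 2" using tlo[of 0] t4 n8 by simp
    hence "L = 4*M - 2" using y0 regA by simp
    hence "3*M - L < 0" using M3 by simp
    then show False using ypos by simp
  qed
  show ?thesis using part1 part2 by blast
qed

end


lemma disc_pos:
  fixes p e :: int
  assumes p4: "p \<ge> 4" and e0: "e \<ge> 0" and e2: "e \<le> 2*p"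
  shows "(6*p^2 + 6*p + 3*e - 5)^2 < 12*p^2*(5*p^2 + 5*e - 8)"
proof -
  have id: "12*p^2*(5*p^2 + 5*e - 8) - (6*p^2 + 6*p + 3*e - 5)^2
      = p^2 * (24*(p^2 - 3*p - 3)) + 60*p - 25 + e*(24*p^2 - 36*p + 30 - 9*e)"
    by (simp add: algebra_simps power2_eq_square power4_eq_xxxx)
  have h1: "p^2 - 3*p - 3 \<ge> 1"
  proof -
    have "p * (p - 3) \<ge> 4 * 1" using p4 by (intro mult_mono) auto
    then show ?thesis by (simp add: algebra_simps power2_eq_square)
  qed
  have h2: "p^2 * (24*(p^2 - 3*p - 3)) \<ge> p^2 * 24" using h1 by (intro mult_left_mono) auto
  have h3: "24*p^2 - 36*p + 30 - 9*e \<ge> 0"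
  proof -
    have "p * (24 * p - 54) \<ge> 4 * 42" using p4 by (intro mult_mono) auto
    then show ?thesis using e2 by (simp add: algebra_simps power2_eq_square)
  qed
  have h4: "e*(24*p^2 - 36*p + 30 - 9*e) \<ge> 0" using e0 h3 by simp
  have "p^2 \<ge> 0" by simp
  then show ?thesis using id h2 h4 p4 by linarith
qed

lemma cmp:
  fixes n p r M L :: int
  assumes n8: "n \<ge> 8" and p4: "p \<ge> 4" and pl: "p^2 \<le> 2*n" and pu: "2*n \<le> p^2 + 2*p"
    and pr: "p * (r - 2) < 6*n - 4"
    and K1: "4*n - 1 - M \<ge> 1"
    and V: "(4*n - 1 - M) * (3*M - L) \<ge> 6*n - 7 + M"
  shows "L < 3*(4*n - 2 - p) - r"
proof -
  define K where "K = 4*n - 1 - M"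
  define Y where "Y = 3*M - L"
  define e where "e = 2*n - p^2"
  define b where "b = 3*p^2 + 6*p + 6*n - 5"
  have KY: "K * Y \<ge> 10*n - 8 - K" using V unfolding K_def Y_def by simp
  have e0: "e \<ge> 0" and e2: "e \<le> 2*p" using pl pu unfolding e_def by auto
  have b_e: "b = 6*p^2 + 6*p + 3*e - 5" unfolding b_def e_def by simp
  have n_e: "10*n - 8 = 5*p^2 + 5*e - 8" unfolding e_def by simp
  have disc: "b^2 < 12*p^2*(10*n - 8)"
    using disc_pos[OF p4 e0 e2] unfolding b_e n_e .
  define Q where "Q = 3*p*K^2 - b*K + p*(10*n - 8)"
  have "12*p*Q = (6*p*K - b)^2 + (12*p^2*(10*n - 8) - b^2)"
    unfolding Q_def by (simp add: algebra_simps power2_eq_square)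
  moreover have "(6*p*K - b)^2 \<ge> 0" by simp
  ultimately have "12*p*Q > 0" using disc by linarith
  hence Qpos: "Q > 0" using p4 by (simp add: zero_less_mult_iff)
  have pr2: "p*r \<le> 6*n - 5 + 2*p" using pr by (simp add: algebra_simps)
  have a1: "p*(K*Y) \<ge> p*(10*n - 8 - K)" using KY p4 by (intro mult_left_mono) auto
  have a2: "K*(p*r) \<le> K*(6*n - 5 + 2*p)" using pr2 K1 unfolding K_def by (intro mult_left_mono) auto
  have "p*K*(Y + 3*K - 3 - 3*p - r) = p*(K*Y) + 3*p*K^2 - 3*p*K - 3*p^2*K - K*(p*r)"
    by (simp add: algebra_simps power2_eq_square)
  also have "\<dots> \<ge> p*(10*n - 8 - K) + 3*p*K^2 - 3*p*K - 3*p^2*K - K*(6*n - 5 + 2*p)"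
    using a1 a2 by linarith
  also have "p*(10*n - 8 - K) + 3*p*K^2 - 3*p*K - 3*p^2*K - K*(6*n - 5 + 2*p) = Q"
    unfolding Q_def b_def by (simp add: algebra_simps power2_eq_square)
  finally have "p*K*(Y + 3*K - 3 - 3*p - r) > 0" using Qpos by linarith
  moreover have "p*K > 0" using p4 K1 unfolding K_def by simp
  ultimately have "Y + 3*K - 3 - 3*p - r > 0" by (simp add: zero_less_mult_iff)
  then show ?thesis unfolding Y_def K_def by simp
qed



lemma lo_from_parity:
  fixes l m t :: nat
  assumes t3: "t \<ge> 3" and lt: "int l > 2 * int m * int (t - 2) - int (t - 2)^2"
   and ev1: "even (int l - int t)"
  shows "int l \<ge> (int t - 2) * (2 * int m - int t + 2) + 2"
proof -
  have it: "int (t - 2) = int t - 2" using t3 by simp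
  have e3: "even (int t * (int t - 3))" by (cases "even (int t)") auto
  have eq: "int l - (2 * int m * (int t - 2) - (int t - 2)^2) = (int l - int t) + int t * (int t - 3) + 4 - 2 * (int m * (int t - 2))"
    by (simp add: algebra_simps power2_eq_square)
  have ev: "even (int l - (2 * int m * (int t - 2) - (int t - 2)^2))"
    unfolding eq using ev1 e3 by simp
  obtain k where k: "int l - (2 * int m * (int t - 2) - (int t - 2)^2) = 2 * k" using ev by (elim evenE) simp
  have "k \<ge> 1" using k lt unfolding it by linarith
  hence "int l \<ge> 2 * int m * (int t - 2) - (int t - 2)^2 + 2" using k by linarith
  moreover have "2 * int m * (int t - 2) - (int t - 2)^2 = (int t - 2) * (2 * int m - int t + 2)"
    by (simp add: algebra_simps power2_eq_square)
  ultimately show ?thesis by simp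
qed

lemma B_props:
  assumes l1: "1 \<le> l" and lm: "l \<le> m^2"
  shows "1 \<le> B m l" "B m l mod 2 = l mod 2"
    "int l \<le> 2 * int m * int (B m l) - int (B m l)^2"
    "B m l \<le> m + 1"
    "B m l \<ge> 3 \<Longrightarrow> int l \<ge> (int (B m l) - 2) * (2 * int m - int (B m l) + 2) + 2"
proof -
  define P where "P t = (0 < t \<and> t mod 2 = l mod 2 \<and> int l \<le> 2 * int m * int t - int t ^ 2)" for t
  have Bdef: "B m l = (LEAST t. P t)" unfolding B_def P_def by simp
  have m1: "m \<ge> 1" using l1 lm by (cases m) auto
  define w where "w = (if m mod 2 = l mod 2 then m else m + 1)"
  have Pw: "P w"
  proof (cases "m mod 2 = l mod 2")
    case True
    have "int l \<le> int m ^ 2" using lm by (metis of_nat_le_iff of_nat_power)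
    moreover have "2 * int m * int m - int m ^ 2 = int m ^ 2" by (simp add: power2_eq_square)
    ultimately have "int l \<le> 2 * int m * int m - int m ^ 2" by linarith
    then show ?thesis unfolding P_def w_def using m1 True by simp
  next
    case False
    have "l \<noteq> m^2"
    proof
      assume "l = m^2"
      hence "even l \<longleftrightarrow> even m" by (simp add: power2_eq_square)
      hence "l mod 2 = m mod 2" by presburger
      then show False using False by simp
    qed
    hence "l \<le> m^2 - 1" using lm by simp
    moreover have "m^2 \<ge> 1" using m1 by simp
    ultimately have "int l \<le> int (m^2) - 1" by (simp add: of_nat_diff)
    hence "int l \<le> int m ^2 - 1" by simp
    moreover have "2 * int m * int (m+1) - int (m+1)^2 = int m ^2 - 1"
      by (simp add: algebra_simps power2_eq_square)
    moreover have "(m + 1) mod 2 = l mod 2" using False by presburger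
    ultimately show ?thesis unfolding P_def w_def using False by simp
  qed
  have PB: "P (B m l)" unfolding Bdef using Pw by (rule LeastI)
  show "1 \<le> B m l" using PB unfolding P_def by simp
  show "B m l mod 2 = l mod 2" using PB unfolding P_def by simp
  show "int l \<le> 2 * int m * int (B m l) - int (B m l)^2" using PB unfolding P_def by simp
  have "B m l \<le> w" unfolding Bdef using Pw by (rule Least_le)
  then show "B m l \<le> m + 1" unfolding w_def by (auto split: if_splits)
  assume t3: "B m l \<ge> 3"
  define t where "t = B m l"
  have "\<not> P (t - 2)"
  proof -
    have "t - 2 < (LEAST t. P t)" using t3 Bdef t_def by simp
    then show ?thesis by (rule not_less_Least)
  qed
  moreover have "0 < t - 2" using t3 t_def by simp
  moreover have "(t - 2) mod 2 = l mod 2"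
  proof -
    have "t mod 2 = l mod 2" using PB unfolding P_def t_def by simp
    moreover have "t = (t - 2) + 2" using t3 t_def by simp
    hence "t mod 2 = (t - 2) mod 2" by (metis mod_add_self2)
    ultimately show ?thesis by simp
  qed
  ultimately have lt: "int l > 2 * int m * int (t - 2) - int (t - 2)^2" unfolding P_def by (simp add: not_le)
  have ev1: "even (int l - int t)"
  proof -
    have "l mod 2 = t mod 2" using PB unfolding P_def t_def by simp
    hence "even l \<longleftrightarrow> even t" by (simp add: even_iff_mod_2_eq_zero)
    then show ?thesis by simp
  qed
  show "int l \<ge> (int (B m l) - 2) * (2 * int m - int (B m l) + 2) + 2"
    using lo_from_parity[where t=t and l=l and m=m] t3 lt ev1 t_def by simp
qed

lemma par_gap: "(y::nat) < t \<Longrightarrow> y mod 2 = t mod 2 \<Longrightarrow> y + 2 \<le> t"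
  by presburger

lemma B_eqI:
  fixes m l t :: nat
  assumes t1: "1 \<le> t" and tp: "t mod 2 = l mod 2" and th: "int l \<le> 2 * int m * int t - int t ^ 2"
    and tl: "t \<le> 2 \<or> int l > 2 * int m * (int t - 2) - (int t - 2)^2" and tm: "t \<le> m + 2"
  shows "B m l = t"
  unfolding B_def
proof (rule Least_equality)
  show "0 < t \<and> t mod 2 = l mod 2 \<and> int l \<le> 2 * int m * int t - int t ^ 2" using t1 tp th by simp
next
  fix y assume Py: "0 < y \<and> y mod 2 = l mod 2 \<and> int l \<le> 2 * int m * int y - int y ^ 2"
  show "t \<le> y"
  proof (rule ccontr)
    assume "\<not> t \<le> y"
    hence "y < t" by simp
    moreover have "y mod 2 = t mod 2" using Py tp by simp
    ultimately have yt: "y + 2 \<le> t" by (rule par_gap)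
    hence t3: "t \<ge> 3" using Py by simp
    hence lt: "int l > 2 * int m * (int t - 2) - (int t - 2)^2" using tl by simp
    have a: "int t - 2 - int y \<ge> 0" using yt by simp
    have b: "2 * int m - (int t - 2) - int y \<ge> 0" using yt tm by simp
    have "(2 * int m * (int t - 2) - (int t - 2)^2) - (2 * int m * int y - int y ^ 2)
        = (int t - 2 - int y) * (2 * int m - (int t - 2) - int y)"
      by (simp add: algebra_simps power2_eq_square)
    moreover have "(int t - 2 - int y) * (2 * int m - (int t - 2) - int y) \<ge> 0" using a b by simp
    ultimately show False using lt Py by linarith
  qed
qed



lemma odd_Lc: "(r::nat) mod 2 = (m+1) mod 2 \<Longrightarrow> x + r = 3*m \<Longrightarrow> x mod 2 = 1"
  by presburger

lemma even_pr: assumes "(r::nat) mod 2 = (m+1) mod 2" "m + p = 4*n - 2" "n \<ge> 1"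
  shows "even (p*r)"
proof (cases "even p")
  case True then show ?thesis by simp
next
  case False
  have "even r" using assms False by presburger
  then show ?thesis by simp
qed

lemma par_int: "even (int a - int b) \<Longrightarrow> (a::nat) mod 2 = b mod 2"
proof -
  assume "even (int a - int b)"
  hence "even a \<longleftrightarrow> even b" by simp
  then show ?thesis by presburger
qed

lemma B4: assumes "even v" "4*m - 4 < v" "v + 16 \<le> 8*m" "m \<ge> 2" shows "B m v = 4"
proof (rule B_eqI)
  show "4 mod 2 = v mod 2" using assms by presburger
  have "int v + 16 \<le> 8 * int m" using assms(3) by linarith
  then show "int v \<le> 2 * int m * int 4 - int 4 ^ 2" by simp
  have "int v > 4 * int m - 4" using assms(2,4) by linarith
  then show "4 \<le> 2 \<or> 2 * int m * (int 4 - 2) - (int 4 - 2)^2 < int v" by simp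
qed (use assms in auto)

lemma exists_p: assumes "n \<ge> (8::nat)" shows "\<exists>p. p^2 \<le> 2*n \<and> 2*n < (p+1)^2"
proof -
  define k where "k = (LEAST k::nat. 2*n < k^2)"
  have ex: "2*n < (2*n+1)^2" by (simp add: power2_eq_square)
  have k: "2*n < k^2" unfolding k_def by (rule LeastI[where P="\<lambda>k. 2*n < k^2", OF ex])
  have k0: "k \<ge> 1" using k by (cases k) auto
  have "\<not> 2*n < (k-1)^2" unfolding k_def by (rule not_less_Least) (use k0 k_def in auto)
  then show ?thesis using k k0 by (intro exI[of _ "k-1"]) auto
qed

lemma construction:
  assumes n8: "n \<ge> (8::nat)"
  shows "\<exists>ls m (p::int) (r::int). length ls = n \<and> sorted ls \<and> impossibly_burnable m ls \<and>
     p \<ge> 4 \<and> p^2 \<le> 2 * int n \<and> 2 * int n \<le> p^2 + 2*p \<and> p * (r - 2) < 6 * int n - 4 \<and>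
     int (ls ! 0) = 3 * (4 * int n - 2 - p) - r \<and> int (ls ! 0) \<ge> 9 * int n - 5"
proof -
  obtain p :: nat where p1: "p^2 \<le> 2*n" and p2: "2*n < (p+1)^2" using exists_p[OF n8] by blast
  have p4: "p \<ge> 4"
  proof (rule ccontr)
    assume "\<not> p \<ge> 4"
    hence "p + 1 \<le> 4" by simp
    hence "(p+1)^2 \<le> 4^2" by (rule power_mono) simp
    then show False using p2 n8 by simp
  qed
  have pn: "p + 1 \<le> n"
  proof (rule ccontr)
    assume "\<not> p + 1 \<le> n"
    hence "n \<le> p" by simp
    hence "n * n \<le> p * p" by (intro mult_mono) auto
    moreover have "8 * n \<le> n * n" using n8 by (intro mult_right_mono) auto
    moreover have "p * p \<le> 2 * n" using p1 by (simp add: power2_eq_square)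
    ultimately show False using n8 by linarith
  qed
  define P where "P = int p"
  define N where "N = int n"
  have P1: "P^2 \<le> 2*N" using p1 unfolding P_def N_def by (metis of_nat_le_iff of_nat_mult of_nat_numeral of_nat_power)
  have P2: "2*N \<le> P^2 + 2*P"
  proof -
    have "2*n + 1 \<le> (p+1)^2" using p2 by simp
    hence "int (2*n + 1) \<le> int ((p+1)^2)" by (simp only: of_nat_le_iff)
    then show ?thesis unfolding P_def N_def by (simp add: power2_eq_square algebra_simps)
  qed
  have P4: "P \<ge> 4" using p4 unfolding P_def by simp
  have N8: "N \<ge> 8" using n8 unfolding N_def by simp
  have PN: "P + 1 \<le> N" using pn unfolding P_def N_def by simp
  define m where "m = 4*n - 2 - p"
  have mI: "int m = 4*N - 2 - P" unfolding m_def N_def P_def using pn by simp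
  define q where "q = n - p"
  have qI: "int q = N - P" unfolding q_def N_def P_def using pn by simp
  define x where "x = 6*n - 4 + p - 1"
  have xI: "int x = 6*N - 5 + P" unfolding x_def N_def P_def using n8 p4 by simp
  define r0 where "r0 = x div p"
  have r0a: "int p * int r0 \<le> int x"
  proof -
    have "p * (x div p) \<le> x" by simp
    then show ?thesis unfolding r0_def by (metis of_nat_le_iff of_nat_mult)
  qed
  have r0b: "int x < int p * (int r0 + 1)"
  proof -
    have "x < p * (x div p + 1)" using p4
      by (metis add.commute div_mult_mod_eq mod_less_divisor mult.commute mult_Suc_right nat_add_left_cancel_less plus_1_eq_Suc less_le_trans zero_less_numeral)
    then have "int x < int (p * (x div p + 1))" by (simp only: of_nat_less_iff)
    then show ?thesis unfolding r0_def by (simp add: algebra_simps)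
  qed
  define r where "r = (if r0 mod 2 = (m+1) mod 2 then r0 else r0 + 1)"
  have rpar: "r mod 2 = (m+1) mod 2" unfolding r_def by presburger
  define R where "R = int r"
  have Rr0: "R = int r0 \<or> R = int r0 + 1" unfolding R_def r_def by auto
  have pr1: "P * R \<ge> 6*N - 4"
  proof -
    have "P * int r0 \<ge> 6*N - 4" using r0b xI unfolding P_def by (simp add: algebra_simps)
    moreover have "P * int r0 \<le> P * R" using Rr0 P4 by auto
    ultimately show ?thesis by linarith
  qed
  have pr2: "P * (R - 2) < 6*N - 4"
  proof -
    have "P * int r0 \<le> 6*N - 5 + P" using r0a xI unfolding P_def by simp
    moreover have "P * R \<le> P * int r0 + P" using Rr0 P4 by (auto simp: algebra_simps)
    ultimately show ?thesis by (simp add: algebra_simps)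
  qed
  have r0le: "4 * int r0 \<le> P * int r0" using P4 by (intro mult_right_mono) auto
  have Rle: "R \<le> 2*N"
  proof -
    have "P * int r0 \<le> 6*N - 5 + P" using r0a xI unfolding P_def by simp
    hence "4 * int r0 \<le> 7*N - 6" using r0le PN by linarith
    then show ?thesis using Rr0 by linarith
  qed
  have R0: "R \<ge> 0" unfolding R_def by simp
  define Lc where "Lc = 3*m - r"
  have LcI: "int Lc = 3 * int m - R" unfolding Lc_def R_def using Rle mI PN
    by (simp add: of_nat_diff R_def)
  have Lodd: "Lc mod 2 = 1"
  proof (rule odd_Lc[OF rpar])
    show "Lc + r = 3*m" unfolding Lc_def using Rle mI PN unfolding R_def by linarith
  qed
  define eps where "eps = p*r - (6*n - 4)"
  have epsI: "int eps = P * R - (6*N - 4)"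
  proof -
    have "int (p*r) \<ge> int (6*n - 4)" using pr1 unfolding P_def R_def N_def using n8 by simp
    hence "p*r \<ge> 6*n - 4" by (simp only: of_nat_le_iff)
    then show ?thesis unfolding eps_def P_def R_def N_def using n8 by (simp add: of_nat_diff)
  qed
  have epsev: "even eps"
  proof -
    have "even (p*r)" using even_pr[OF rpar] m_def pn n8 by simp
    moreover have "even (6*n - 4)" using n8 by presburger
    ultimately show ?thesis unfolding eps_def by simp
  qed
  define v0 where "v0 = 4*m - 2"
  define v1 where "v1 = 4*m - 2 + eps"
  have m2: "m \<ge> 2" using mI PN N8 by linarith
  have m4: "4*m \<ge> 2" using m2 by simp
  have v0I: "int v0 = 4 * int m - 2" unfolding v0_def using m4 by (simp add: of_nat_diff)
  have v1I: "int v1 = 4 * int m - 2 + int eps" unfolding v1_def using m4 by (simp add: of_nat_diff)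
  have BL: "B m Lc = 3"
  proof (rule B_eqI)
    show "3 mod 2 = Lc mod 2" using Lodd by simp
    show "int Lc \<le> 2 * int m * int 3 - int 3 ^ 2" using LcI R0 mI PN N8 by simp
    show "3 \<le> 2 \<or> 2 * int m * (int 3 - 2) - (int 3 - 2)^2 < int Lc" using LcI Rle mI PN by simp
  qed (use m2 in auto)
  have Bv0: "B m v0 = 4"
    by (rule B4) (use v0I mI PN N8 m2 in \<open>auto simp: v0_def\<close>)
  have Bv1: "B m v1 = 4"
  proof (rule B4)
    show "even v1" unfolding v1_def using epsev m2 by simp
    show "4*m - 4 < v1" using v1I mI PN N8 by linarith
    show "v1 + 16 \<le> 8*m" using v1I epsI pr2 mI PN N8 by (simp add: algebra_simps)
  qed (use m2 in auto)
  define ls where "ls = replicate p Lc @ replicate (q - 1) v0 @ [v1]"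
  have len: "length ls = n" unfolding ls_def using pn q_def by simp
  have LcV0: "Lc \<le> v0" using LcI v0I R0 mI PN N8 by linarith
  have V0V1: "v0 \<le> v1" unfolding v1_def v0_def by simp
  have sorted: "sorted ls" unfolding ls_def using LcV0 V0V1
    by (auto simp: sorted_append)
  have ls0: "ls ! 0 = Lc" unfolding ls_def using p4 by (simp add: nth_append)
  have sum_ls: "sum_list ls = p * Lc + (q - 1) * v0 + v1" unfolding ls_def by (simp add: sum_list_replicate)
  have sumI: "int (sum_list ls) = int m ^ 2"
  proof -
    have "int (sum_list ls) = P * int Lc + (int q - 1) * int v0 + int v1"
      unfolding sum_ls P_def using pn q_def by (simp add: of_nat_diff)
    also have "\<dots> = int m ^ 2" unfolding LcI v0I v1I epsI qI mI
      by (simp add: algebra_simps power2_eq_square)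
    finally show ?thesis .
  qed
  have sumB: "sum_list (map (B m) ls) = 3 * p + 4 * q" unfolding ls_def using BL Bv0 Bv1 pn q_def
    by (simp add: sum_list_replicate algebra_simps)
  have pos: "\<forall>z\<in>set ls. 1 \<le> z" unfolding ls_def using LcI mI PN N8 Rle v0I V0V1
    by auto
  have ib: "impossibly_burnable m ls"
    unfolding impossibly_burnable_def path_forest_of_order_def
  proof (intro conjI)
    show "\<forall>z\<in>set ls. 1 \<le> z" using pos .
    show "sum_list ls = m^2" using sumI by (metis of_nat_eq_iff of_nat_power)
    have "int (3 * p + 4 * q) > int m" using qI mI unfolding P_def by simp
    then show "m < sum_list (map (B m) ls)" unfolding sumB by linarith
  qed
  define S where "S = (if even n then 3*N - 1 - 3*P else 3*N - 2 - 3*P)"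
  have PS: "P * S \<ge> 6*N - 4"
  proof (cases "even n")
    case True
    have "P * S - (6*N - 4) = (P - 4)*(3*N - 1) + 3*(2*N - P^2)"
      unfolding S_def using True by (simp add: algebra_simps power2_eq_square)
    moreover have "(P - 4)*(3*N - 1) \<ge> 0" using P4 N8 by simp
    ultimately show ?thesis using P1 by (smt (verit))
  next
    case False
    have e: "P * S - (6*N - 4) = (P - 4)*(3*N - 2) + 3*(2*N - P^2) - 4"
      unfolding S_def using False by (simp add: algebra_simps power2_eq_square)
    show ?thesis
    proof (cases "P = 4")
      case True
      have "n \<noteq> 8" using False by auto
      hence "N \<ge> 9" using N8 unfolding N_def by simp
      then show ?thesis using e True P1 by simp
    next
      case False
      hence "P \<ge> 5" using P4 by simp
      hence "(P - 4)*(3*N - 2) \<ge> 1*(3*N - 2)" using N8 by (intro mult_right_mono) auto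
      then show ?thesis using e P1 N8 by (smt (verit))
    qed
  qed
  have Spar: "even (S - int m - 1)" unfolding S_def mI N_def by auto
  have r0S: "int r0 \<le> S"
  proof -
    have "P * int r0 \<le> 6*N - 5 + P" using r0a xI unfolding P_def by simp
    hence "P * int r0 < P * (S + 1)" using PS by (simp add: algebra_simps)
    then show ?thesis using P4 by (simp add: mult_less_cancel_left)
  qed
  have RS: "R \<le> S"
  proof (cases "r0 mod 2 = (m+1) mod 2")
    case True
    then show ?thesis using r0S unfolding R_def r_def by simp
  next
    case False
    have "S \<noteq> int r0"
    proof
      assume "S = int r0"
      hence "even (int r0 - int (m+1))" using Spar by simp
      hence "r0 mod 2 = (m+1) mod 2" by (rule par_int)
      then show False using False by simp
    qed
    then show ?thesis using r0S False unfolding R_def r_def by simp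
  qed
  have big: "int Lc \<ge> 9 * N - 5" using RS LcI mI unfolding S_def by (auto split: if_splits)
  show ?thesis
    apply (rule exI[of _ ls], rule exI[of _ m], rule exI[of _ P], rule exI[of _ R])
    using len sorted ib P4 P1 P2 pr2 ls0 LcI mI big unfolding N_def by simp
qed



context fc begin
lemma bound16: "L \<le> 16 * int n"
proof (cases "M \<ge> 4 * int n - 2")
  case True
  then show ?thesis using regZ by simp
next
  case False
  hence "M \<le> 4 * int n - 3" by simp
  hence "M^2 \<le> (4 * int n - 3)^2" using M0 by (intro power_mono) auto
  moreover have "(4 * int n - 3)^2 < int n * (16 * int n)"
    using n8i by (simp add: power2_eq_square algebra_simps)
  ultimately have "int n * L < int n * (16 * int n)" using nL by linarith
  then show ?thesis using n8i by (simp add: mult_less_cancel_left)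
qed
end

lemma bridge:
  assumes n8: "n \<ge> 8" and len: "length l = n" and so: "sorted l" and ib: "impossibly_burnable m l"
  shows "fc n (int m) (int (l ! 0)) (\<lambda>i. int (l ! i)) (\<lambda>i. int (B m (l ! i)))"
proof -
  have pos: "\<forall>x\<in>set l. 1 \<le> x" and sl: "sum_list l = m^2" and sb: "sum_list (map (B m) l) > m"
    using ib unfolding impossibly_burnable_def path_forest_of_order_def by auto
  have le1: "1 \<le> l ! i" if "i < n" for i using pos that len by auto
  have lem: "l ! i \<le> m^2" if "i < n" for i
    using member_le_sum_list[of "l ! i" l] that len sl by auto
  note BP = B_props[OF le1 lem]
  have sumY: "(\<Sum>i<n. int (l ! i)) = int m ^ 2"
  proof -
    have "sum_list l = (\<Sum>i = 0..<n. l ! i)" using len by (simp add: sum_list_sum_nth)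
    hence "int (sum_list l) = (\<Sum>i<n. int (l ! i))" by (simp add: atLeast0LessThan)
    then show ?thesis using sl by simp
  qed
  have sumT: "(\<Sum>i<n. int (B m (l ! i))) = int (sum_list (map (B m) l))"
  proof -
    have "sum_list (map (B m) l) = (\<Sum>i = 0..<n. map (B m) l ! i)" using len by (simp add: sum_list_sum_nth)
    also have "\<dots> = (\<Sum>i<n. B m (l ! i))" using len by (simp add: atLeast0LessThan)
    finally show ?thesis by simp
  qed
  have evd: "even ((\<Sum>i<n. int (B m (l ! i))) - int m)"
  proof -
    have e1: "even (\<Sum>i<n. int (B m (l ! i)) - int (l ! i))"
    proof (rule dvd_sum)
      fix i assume "i \<in> {..<n}"
      hence "B m (l ! i) mod 2 = l ! i mod 2" using BP(2) by simp
      hence "even (B m (l ! i)) \<longleftrightarrow> even (l ! i)" by (simp add: even_iff_mod_2_eq_zero)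
      then show "even (int (B m (l ! i)) - int (l ! i))" by simp
    qed
    have e2: "even (int m ^ 2 - int m)" by (simp add: power2_eq_square)
    have "(\<Sum>i<n. int (B m (l ! i))) - int m = (\<Sum>i<n. int (B m (l ! i)) - int (l ! i)) + (int m ^ 2 - int m)"
      using sumY by (simp add: sum_subtractf)
    then show ?thesis using e1 e2 by simp
  qed
  have tsum: "(\<Sum>i<n. int (B m (l ! i))) \<ge> int m + 2"
  proof -
    have gt: "(\<Sum>i<n. int (B m (l ! i))) > int m" using sumT sb by simp
    obtain k where k: "(\<Sum>i<n. int (B m (l ! i))) - int m = 2 * k" using evd by (elim evenE) simp
    have "k \<ge> 1" using gt k by linarith
    then show ?thesis using k by linarith
  qed
  show ?thesis
  proof (unfold_locales)
    show "n \<ge> 8" by (rule n8)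
    show "int m \<ge> 0" by simp
    show "int (l ! 0) \<le> int (l ! i)" if "i < n" for i
      using sorted_nth_mono[OF so, of 0 i] that len by simp
    show "int (l ! 0) = int (l ! 0)" by simp
    show "1 \<le> int (l ! i)" if "i < n" for i using le1[OF that] by simp
    show "(\<Sum>i<n. int (l ! i)) = int m ^ 2" by (rule sumY)
    show "int m + 2 \<le> (\<Sum>i<n. int (B m (l ! i)))" by (rule tsum)
    show "1 \<le> int (B m (l ! i))" if "i < n" for i using BP(1)[OF that that] by simp
    show "int (l ! i) \<le> 2 * int m * int (B m (l ! i)) - int (B m (l ! i))^2" if "i < n" for i
      using BP(3)[OF that that] by simp
    show "int (B m (l ! i)) \<le> int m + 1" if "i < n" for i using BP(4)[OF that that] by simp
    show "int (l ! i) \<ge> (int (B m (l ! i)) - 2)*(2 * int m - int (B m (l ! i)) + 2) + 2"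
      if "i < n" "int (B m (l ! i)) \<ge> 3" for i using BP(5)[OF that(1) that(1)] that(2) by simp
  qed
qed

theorem mainTheorem5:
  fixes n m :: nat and l :: "nat list"
  assumes "n \<ge> 8"
    and "length l = n"
    and "sorted l"
    and "impossibly_burnable m l"
    and "l ! 0 = M n"
  shows "(\<forall>i<n. B m (l ! i) \<in> {3, 4}) \<and> odd (l ! 0) \<and> B m (l ! 0) = 3"
proof -
  note n8 = assms(1)
  define Q where "Q x = (x \<in> {ls ! 0 | ls m. length ls = n \<and> sorted ls \<and> impossibly_burnable m ls})" for x
  have MQ: "M n = Greatest Q" unfolding M_def Q_def by simp
  have bnd: "y \<le> 16 * n" if "Q y" for y
  proof -
    obtain ls mm where y: "y = ls ! 0" and h: "length ls = n" "sorted ls" "impossibly_burnable mm ls"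
      using \<open>Q y\<close> unfolding Q_def by blast
    interpret fc n "int mm" "int (ls ! 0)" "\<lambda>i. int (ls ! i)" "\<lambda>i. int (B mm (ls ! i))"
      by (rule bridge[OF n8 h])
    have "int (ls ! 0) \<le> 16 * int n" by (rule bound16)
    then show ?thesis using y by simp
  qed
  obtain lc mc p r where c: "length lc = n" "sorted lc" "impossibly_burnable mc lc"
      and cp: "p \<ge> 4" "p^2 \<le> 2 * int n" "2 * int n \<le> p^2 + 2*p" "p * (r - 2) < 6 * int n - 4"
      and cL: "int (lc ! 0) = 3 * (4 * int n - 2 - p) - r" and cb: "int (lc ! 0) \<ge> 9 * int n - 5"
    using construction[OF n8] by blast
  have "Q (lc ! 0)" unfolding Q_def using c by blast
  hence "lc ! 0 \<le> Greatest Q" using bnd by (rule Greatest_le_nat)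
  hence ge: "int (l ! 0) \<ge> int (lc ! 0)" using assms(5) MQ by simp
  interpret F: fc n "int m" "int (l ! 0)" "\<lambda>i. int (l ! i)" "\<lambda>i. int (B m (l ! i))"
    by (rule bridge[OF n8 assms(2,3,4)])
  have LL: "int (l ! 0) \<ge> 9 * int n - 5" using ge cb by simp
  have MD: "int m \<le> 4 * int n - 3"
  proof (rule ccontr)
    assume "\<not> int m \<le> 4 * int n - 3"
    hence "int m \<ge> 4 * int n - 2" by simp
    then have "int (l ! 0) \<le> 9 * int n - 6" by (rule F.regZ)
    then show False using LL by simp
  qed
  note res = F.main_res[OF MD LL]
  have all34: "\<forall>i<n. B m (l ! i) \<in> {3, 4}"
  proof (intro allI impI)
    fix i assume i: "i < n"
    show "B m (l ! i) \<in> {3, 4}"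
    proof (rule ccontr)
      assume "B m (l ! i) \<notin> {3, 4}"
      hence "int (B m (l ! i)) \<notin> {3, 4}" by auto
      hence V: "(4 * int n - 1 - int m) * (3 * int m - int (l ! 0)) \<ge> 6 * int n - 7 + int m"
        using res i by blast
      have "int (l ! 0) < 3 * (4 * int n - 2 - p) - r"
        by (rule cmp[OF _ cp(1) cp(2) cp(3) cp(4) _ V]) (use n8 MD in auto)
      then show False using ge cL by simp
    qed
  qed
  have t0: "B m (l ! 0) = 3"
  proof -
    have "B m (l ! 0) \<in> {3, 4}" using all34 n8 by auto
    moreover have "int (B m (l ! 0)) \<noteq> 4" using res by simp
    ultimately show ?thesis by auto
  qed
  have "odd (l ! 0)"
  proof -
    have pos: "\<forall>x\<in>set l. 1 \<le> x" and sl: "sum_list l = m^2"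
      using assms(4) unfolding impossibly_burnable_def path_forest_of_order_def by auto
    have "1 \<le> l ! 0" using pos assms(2) n8 by auto
    moreover have "l ! 0 \<le> m^2" using member_le_sum_list[of "l ! 0" l] assms(2) n8 sl by auto
    ultimately have "B m (l ! 0) mod 2 = l ! 0 mod 2" by (rule B_props(2))
    then show ?thesis using t0 by presburger
  qed
  then show ?thesis using all34 t0 by simp
qed

end
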